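(* Let $n\geq 1$ be an integer. The set of real neighbours of $\mathcal{E}_n$ is $\{0,\pm1,\pm2\}$ when $n=1$ or $n\geq 5$, and is $\{0,\pm1,\pm2,\pm3\}$ when $n\in\{2,3,4\}$. The set of real neighbours of $T_n$ is $\{0,\pm1\}$.
   Context: Let $b:=-n+i$. $T_n$ is the attractor of the iterated function system $\{z\mapsto b^{-1}(z+d): d\in\{0,1,\ldots,n^2\}\}$, i.e. $T_n=\{\sum_{j\ge1}d_jb^{-j}: d_j\in\{0,\ldots,n^2\}\}$. $\mathcal{E}_n$ is the attractor of $\{z\mapsto b^{-1}(z+\delta): \delta\in\{0,\pm1,\ldots,\pm n^2\}\}$, i.e. $\mathcal{E}_n=\{\sum_{j\ge1}\delta_jb^{-j}: \delta_j\in\{-n^2,\ldots,n^2\}\}$. For $Y\subset\mathbb{C}$, a neighbour of $Y$ is a Gaussian integer $s$ with $Y\cap(Y+s)\neq\emptyset$; a real neighbour is a neighbour that is a real number (an integer). *)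

theory Defs
  imports "HOL-Analysis.Analysis"
begin

definition base :: "nat \<Rightarrow> complex" where
  "base n = - of_nat n + \<i>"

text \<open>Attractor of the IFS z -> b^{-1}(z+d), d in D:
  the set of all sums sum_{j>=1} d_j b^{-j} with digits d_j in D
  (indexed here from 0, so digit k has weight b^{-(k+1)}).\<close>
definition attractor :: "complex \<Rightarrow> int set \<Rightarrow> complex set" where
  "attractor b D = {z. \<exists>d::nat \<Rightarrow> int. (\<forall>k. d k \<in> D) \<and>
                       z = (\<Sum>k. of_int (d k) / b ^ Suc k)}"

definition T_set :: "nat \<Rightarrow> complex set" where
  "T_set n = attractor (base n) {0 .. int (n^2)}"

definition E_set :: "nat \<Rightarrow> complex set" where
  "E_set n = attractor (base n) {- int (n^2) .. int (n^2)}"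

definition gaussian_int :: "complex \<Rightarrow> bool" where
  "gaussian_int s \<longleftrightarrow> Re s \<in> \<int> \<and> Im s \<in> \<int>"

definition neighbour :: "complex set \<Rightarrow> complex \<Rightarrow> bool" where
  "neighbour Y s \<longleftrightarrow> gaussian_int s \<and> Y \<inter> ((\<lambda>y. y + s) ` Y) \<noteq> {}"

definition real_neighbours :: "complex set \<Rightarrow> int set" where
  "real_neighbours Y = {m::int. neighbour Y (of_int m)}"

end

theory Submission
  imports Defs
begin

lemma norm_base: "norm (base n) = sqrt (real n ^ 2 + 1)"
  by (simp add: base_def cmod_def)

lemma norm_base_gt1: "n \<ge> 1 \<Longrightarrow> norm (base n) > 1"
  by (simp add: norm_base)

lemma summ:
  fixes b :: complex
  assumes nb: "norm b > 1" and hd: "\<forall>k. \<bar>d k\<bar> \<le> M"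
  shows "summable (\<lambda>k. of_int (d k) / b ^ Suc k)"
proof (rule summable_comparison_test'[where g="\<lambda>k. M * (inverse (norm b)) ^ Suc k"])
  show "summable (\<lambda>k. M * (inverse (norm b)) ^ Suc k)"
    using nb by (intro summable_mult summable_geometric_iff[THEN iffD2] summable_Suc_iff[THEN iffD2])
      (simp add: inverse_less_1_iff)
next
  fix k :: nat
  have "norm (of_int (d k) / b ^ Suc k :: complex) = \<bar>real_of_int (d k)\<bar> / norm b ^ Suc k"
    by (simp add: norm_divide norm_power norm_mult del: power_Suc)
  also have "\<dots> \<le> M / norm b ^ Suc k"
    using hd nb by (intro divide_right_mono) (auto, metis of_int_abs of_int_le_iff)
  also have "\<dots> = M * (inverse (norm b)) ^ Suc k"
    by (simp add: field_simps power_inverse)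
  finally show "norm (of_int (d k) / b ^ Suc k :: complex) \<le> M * (inverse (norm b)) ^ Suc k" .
qed

lemma summD:
  fixes b :: complex
  assumes nb: "norm b > 1" and hD: "\<forall>e\<in>D. \<bar>e\<bar> \<le> M" and hd: "\<forall>k. d k \<in> D"
  shows "summable (\<lambda>k. of_int (d k) / b ^ Suc k)"
  using hD hd by (intro summ[OF nb, of d M]) blast

lemma orbit_sum:
  fixes b :: complex and x :: "nat \<Rightarrow> complex"
  assumes nb: "norm b > 1" and hx: "\<forall>k. norm (x k) \<le> C"
    and rec: "\<forall>k. x (Suc k) = b * x k - of_int (d k)"
  shows "x 0 = (\<Sum>k. of_int (d k) / b ^ Suc k)"
proof -
  have b0: "b \<noteq> 0" using nb by auto
  have eq: "x 0 = (\<Sum>k<M. of_int (d k) / b ^ Suc k) + x M / b ^ M" for M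
  proof (induction M)
    case 0 then show ?case by simp
  next
    case (Suc M)
    have "x M / b ^ M = of_int (d M) / b ^ Suc M + x (Suc M) / b ^ Suc M"
      using rec b0 by (simp add: field_simps)
    then show ?case using Suc by simp
  qed
  have "(\<lambda>M. x M / b ^ M) \<longlonglongrightarrow> 0"
  proof (rule tendsto_norm_zero_cancel)
    have lim: "(\<lambda>M. C * inverse (norm b ^ M)) \<longlonglongrightarrow> 0"
      using LIMSEQ_inverse_realpow_zero[OF nb] tendsto_mult_left[of _ 0 sequentially C] by auto
    show "(\<lambda>M. norm (x M / b ^ M)) \<longlonglongrightarrow> 0"
    proof (rule Lim_null_comparison[OF _ lim])
      show "\<forall>\<^sub>F M in sequentially. norm (norm (x M / b ^ M)) \<le> C * inverse (norm b ^ M)"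
      proof (intro always_eventually allI)
        fix M
        have "norm (norm (x M / b ^ M)) = norm (x M) * inverse (norm b ^ M)"
          by (simp add: norm_mult norm_inverse norm_power divide_inverse)
        also have "\<dots> \<le> C * inverse (norm b ^ M)"
          using hx nb by (intro mult_right_mono) auto
        finally show "norm (norm (x M / b ^ M)) \<le> C * inverse (norm b ^ M)" .
      qed
    qed
  qed
  then have "(\<lambda>M. x 0 - x M / b ^ M) \<longlonglongrightarrow> x 0 - 0"
    by (intro tendsto_diff tendsto_const)
  then have "(\<lambda>k. of_int (d k) / b ^ Suc k) sums x 0"
  proof -
    have "(\<lambda>M. x 0 - x M / b ^ M) = (\<lambda>M. (\<Sum>k<M. of_int (d k) / b ^ Suc k))"
      using eq by (metis add_diff_cancel_right')
    then show ?thesis using \<open>(\<lambda>M. x 0 - x M / b ^ M) \<longlonglongrightarrow> x 0 - 0\<close> unfolding sums_def by simp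
  qed
  then show ?thesis by (rule sums_unique)
qed

lemma orbit_mem:
  fixes b :: complex and x :: "nat \<Rightarrow> complex"
  assumes nb: "norm b > 1" and hx: "\<forall>k. norm (x k) \<le> C"
    and rec: "\<forall>k. x (Suc k) = b * x k - of_int (d k)" and hd: "\<forall>k. d k \<in> D"
  shows "x 0 \<in> attractor b D"
  unfolding attractor_def using orbit_sum[OF nb hx rec] hd by blast

lemma attractor_sub:
  fixes b :: complex
  assumes nb: "norm b > 1" and hD: "\<forall>e\<in>D. \<bar>e\<bar> \<le> M"
    and cB: "closed B" and B0: "0 \<in> B"
    and inv: "\<And>z e. z \<in> B \<Longrightarrow> e \<in> D \<Longrightarrow> (z + of_int e) / b \<in> B"
  shows "attractor b D \<subseteq> B"
proof
  fix z assume "z \<in> attractor b D"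
  then obtain d where hd: "\<forall>k. d k \<in> D" and z: "z = (\<Sum>k. of_int (d k) / b ^ Suc k)"
    unfolding attractor_def by blast
  have P: "\<forall>d. (\<forall>k. d k \<in> D) \<longrightarrow> (\<Sum>k<N. of_int (d k) / b ^ Suc k) \<in> B" for N
  proof (induction N)
    case 0 then show ?case using B0 by simp
  next
    case (Suc N)
    show ?case
    proof (intro allI impI)
      fix d :: "nat \<Rightarrow> int" assume hd: "\<forall>k. d k \<in> D"
      have "(\<Sum>k<Suc N. of_int (d k) / b ^ Suc k) =
            (of_int (d 0) + (\<Sum>k<N. of_int (d (Suc k)) / b ^ Suc k)) / b"
        unfolding sum.lessThan_Suc_shift by (simp add: sum_divide_distrib add_divide_distrib mult.commute mult.left_commute)
      moreover have sB: "(\<Sum>k<N. of_int (d (Suc k)) / b ^ Suc k) \<in> B"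
        using Suc.IH[rule_format, of "\<lambda>k. d (Suc k)"] hd by blast
      moreover have "((\<Sum>k<N. of_int (d (Suc k)) / b ^ Suc k) + of_int (d 0)) / b \<in> B"
        using inv[OF sB] hd by blast
      ultimately show "(\<Sum>k<Suc N. of_int (d k) / b ^ Suc k) \<in> B"
        by (simp add: add.commute)
    qed
  qed
  have "summable (\<lambda>k. of_int (d k) / b ^ Suc k)"
    by (rule summD[OF nb hD]) (use hd in simp)
  then have lim: "(\<lambda>N. \<Sum>k<N. of_int (d k) / b ^ Suc k) \<longlonglongrightarrow> z"
    using z summable_LIMSEQ by blast
  show "z \<in> B"
    by (rule closed_sequentially[OF cB _ lim]) (use P hd in blast)
qed

lemma attractor_shift:
  fixes b :: complex
  assumes nb: "norm b > 1" and hD: "\<forall>e\<in>D. \<bar>e\<bar> \<le> M" and z: "z \<in> attractor b D"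
  shows "\<exists>e\<in>D. b * z - of_int e \<in> attractor b D"
proof -
  obtain d where hd: "\<forall>k. d k \<in> D" and z: "z = (\<Sum>k. of_int (d k) / b ^ Suc k)"
    using z unfolding attractor_def by blast
  have b0: "b \<noteq> 0" using nb by auto
  have s1: "summable (\<lambda>k. of_int (d k) / b ^ Suc k)"
    by (rule summD[OF nb hD]) (use hd in simp)
  have s2: "summable (\<lambda>k. of_int (d (Suc k)) / b ^ Suc k)"
    by (rule summD[OF nb hD]) (use hd in simp)
  define S1 where "S1 = (\<Sum>k. of_int (d (Suc k)) / b ^ Suc k)"
  have A: "(\<Sum>k. of_int (d (Suc k)) / b ^ Suc (Suc k)) = z - of_int (d 0) / b"
    using suminf_split_head[OF s1] unfolding z by simp
  have fe: "(\<lambda>k. of_int (d (Suc k)) / b ^ Suc (Suc k)) = (\<lambda>k. (of_int (d (Suc k)) / b ^ Suc k) / b)"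
    by (simp add: fun_eq_iff mult.commute)
  have B: "(\<Sum>k. of_int (d (Suc k)) / b ^ Suc (Suc k)) = S1 / b"
    unfolding fe S1_def by (rule suminf_divide[OF s2])
  have C: "S1 / b = z - of_int (d 0) / b" using A B by simp
  have "S1 = b * (S1 / b)" using b0 by simp
  also have "\<dots> = b * z - b * (of_int (d 0) / b)" unfolding C by (rule right_diff_distrib)
  also have "b * (of_int (d 0) / b) = of_int (d 0)" using b0 by simp
  finally have e: "b * z - of_int (d 0) = (\<Sum>k. of_int (d (Suc k)) / b ^ Suc k)" unfolding S1_def by simp
  have "b * z - of_int (d 0) \<in> attractor b D"
    unfolding attractor_def by (rule CollectI, rule exI[of _ "\<lambda>k. d (Suc k)"]) (use hd e in simp)
  then show ?thesis using hd by blast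
qed

lemma attractor_diff:
  fixes b :: complex
  assumes nb: "norm b > 1" and hD: "\<forall>e\<in>D. \<bar>e\<bar> \<le> M"
    and y: "y \<in> attractor b D" and z: "z \<in> attractor b D"
    and D': "\<And>a c. a \<in> D \<Longrightarrow> c \<in> D \<Longrightarrow> a - c \<in> D'"
  shows "y - z \<in> attractor b D'"
proof -
  obtain d where hd: "\<forall>k. d k \<in> D" and y: "y = (\<Sum>k. of_int (d k) / b ^ Suc k)"
    using y unfolding attractor_def by blast
  obtain d' where hd': "\<forall>k. d' k \<in> D" and z: "z = (\<Sum>k. of_int (d' k) / b ^ Suc k)"
    using z unfolding attractor_def by blast
  have s1: "summable (\<lambda>k. of_int (d k) / b ^ Suc k)"
    by (rule summD[OF nb hD]) (use hd in simp)
  have s2: "summable (\<lambda>k. of_int (d' k) / b ^ Suc k)"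
    using summ[OF nb, of d' M] hD hd' by blast
  have yz: "y - z = (\<Sum>k. of_int (d k - d' k) / b ^ Suc k)"
    using suminf_diff[OF s1 s2] y z by (simp add: diff_divide_distrib)
  show ?thesis
    unfolding attractor_def by (rule CollectI, intro exI[of _ "\<lambda>k. d k - d' k"] conjI) (use hd hd' D' yz in auto)
qed

lemma attractor_diff_conv:
  fixes b :: complex
  assumes nb: "norm b > 1" and hD: "\<forall>e\<in>D. \<bar>e\<bar> \<le> M"
    and w: "w \<in> attractor b D'"
    and D': "\<And>e. e \<in> D' \<Longrightarrow> \<exists>a\<in>D. \<exists>c\<in>D. e = a - c"
  shows "\<exists>y\<in>attractor b D. \<exists>z\<in>attractor b D. y = z + w"
proof -
  obtain d where hd: "\<forall>k. d k \<in> D'" and w: "w = (\<Sum>k. of_int (d k) / b ^ Suc k)"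
    using w unfolding attractor_def by blast
  have "\<forall>k. \<exists>p. fst p \<in> D \<and> snd p \<in> D \<and> d k = fst p - snd p"
  proof
    fix k
    obtain a c where "a \<in> D" "c \<in> D" "d k = a - c" using D' hd by blast
    then show "\<exists>p. fst p \<in> D \<and> snd p \<in> D \<and> d k = fst p - snd p" by (intro exI[of _ "(a,c)"]) simp
  qed
  then obtain p where hp: "\<forall>k. fst (p k) \<in> D \<and> snd (p k) \<in> D \<and> d k = fst (p k) - snd (p k)"
    by metis
  define y where "y = (\<Sum>k. of_int (fst (p k)) / b ^ Suc k)"
  define z where "z = (\<Sum>k. of_int (snd (p k)) / b ^ Suc k)"
  have ya: "y \<in> attractor b D"
    unfolding y_def attractor_def by (rule CollectI, intro exI[of _ "\<lambda>k. fst (p k)"] conjI) (use hp in auto)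
  have za: "z \<in> attractor b D"
    unfolding z_def attractor_def by (rule CollectI, intro exI[of _ "\<lambda>k. snd (p k)"] conjI) (use hp in auto)
  have s1: "summable (\<lambda>k. of_int (fst (p k)) / b ^ Suc k)"
    by (rule summD[OF nb hD]) (use hp in simp)
  have s2: "summable (\<lambda>k. of_int (snd (p k)) / b ^ Suc k)"
    by (rule summD[OF nb hD]) (use hp in simp)
  have "y - z = (\<Sum>k. of_int (fst (p k)) / b ^ Suc k - of_int (snd (p k)) / b ^ Suc k)"
    unfolding y_def z_def by (rule suminf_diff[OF s1 s2])
  also have "\<dots> = w"
    unfolding w using hp by (simp add: diff_divide_distrib[symmetric])
  finally have "y - z = w" .
  then have "y = z + w" by (simp add: algebra_simps)
  then show ?thesis using ya za by blast
qed

lemma real_nb_char: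
  fixes b :: complex
  assumes nb: "norm b > 1" and hD: "\<forall>e\<in>D. \<bar>e\<bar> \<le> M"
    and D'1: "\<And>a c. a \<in> D \<Longrightarrow> c \<in> D \<Longrightarrow> a - c \<in> D'"
    and D'2: "\<And>e. e \<in> D' \<Longrightarrow> \<exists>a\<in>D. \<exists>c\<in>D. e = a - c"
  shows "real_neighbours (attractor b D) = {m. of_int m \<in> attractor b D'}"
proof -
  have "neighbour (attractor b D) (of_int m) \<longleftrightarrow> of_int m \<in> attractor b D'" for m
  proof
    assume "neighbour (attractor b D) (of_int m)"
    then obtain y z where y: "y \<in> attractor b D" and z: "z \<in> attractor b D" and yz: "y = z + of_int m"
      unfolding neighbour_def by blast
    show "of_int m \<in> attractor b D'"
      using attractor_diff[OF nb hD y z D'1] yz by simp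
  next
    assume "of_int m \<in> attractor b D'"
    then obtain y z where "y \<in> attractor b D" "z \<in> attractor b D" "y = z + of_int m"
      using attractor_diff_conv[OF nb hD _ D'2] by blast
    then show "neighbour (attractor b D) (of_int m)"
      unfolding neighbour_def gaussian_int_def by auto
  qed
  then show ?thesis unfolding real_neighbours_def by blast
qed


lemma Re_step: "Re ((z + of_int e) / base n) = (Im z - real n * (Re z + of_int e)) / (real n ^ 2 + 1)"
  by (simp add: base_def Re_divide power2_eq_square)

lemma Im_step: "Im ((z + of_int e) / base n) = (- (Re z + of_int e) - real n * Im z) / (real n ^ 2 + 1)"
  by (simp add: base_def Im_divide power2_eq_square algebra_simps)

lemma abs_div_le:
  fixes X Y a :: real
  assumes "Y > 0" "\<bar>X\<bar> \<le> a * Y"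
  shows "\<bar>X / Y\<bar> \<le> a"
  using assms by (simp add: abs_divide pos_divide_le_eq)

lemma IBgen:
  fixes N :: int and a c :: real
  assumes n1: "n \<ge> 1" and a0: "a \<ge> 0" and c0: "c \<ge> 0" and N0: "N \<ge> 0"
    and h1: "a + N + real n * c \<le> c * (real n ^ 2 + 1)"
    and h2: "c + real n * (a + N) \<le> a * (real n ^ 2 + 1)"
    and z: "z \<in> attractor (base n) {-N..N}"
  shows "\<bar>Im z\<bar> \<le> c"
proof -
  let ?B = "{z. \<bar>Re z\<bar> \<le> a \<and> \<bar>Im z\<bar> \<le> c}"
  have "attractor (base n) {-N..N} \<subseteq> ?B"
  proof (rule attractor_sub[where M=N])
    show "1 < cmod (base n)" using norm_base_gt1[OF n1] .
    show "\<forall>e\<in>{- N..N}. \<bar>e\<bar> \<le> N" by auto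
    show "closed ?B"
      by (intro closed_Collect_conj closed_Collect_le continuous_intros)
    show "0 \<in> ?B" using a0 c0 by simp
  next
    fix w e assume w: "w \<in> ?B" and e: "e \<in> {-N..N}"
    define P where "P = Re w + of_int e"
    define q where "q = Im w"
    have P: "\<bar>P\<bar> \<le> a + N" using w e unfolding P_def by auto
    have q: "\<bar>q\<bar> \<le> c" using w unfolding q_def by auto
    have pos: "real n ^ 2 + 1 > 0" using zero_le_power2[of "real n"] by linarith
    have nq: "\<bar>real n * q\<bar> \<le> real n * c" using q by (simp add: abs_mult mult_left_mono)
    have nP: "\<bar>real n * P\<bar> \<le> real n * (a + N)" using P by (simp add: abs_mult mult_left_mono)
    have "\<bar>q - real n * P\<bar> \<le> a * (real n ^ 2 + 1)" using nP q h2 by linarith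
    then have r: "\<bar>Re ((w + of_int e) / base n)\<bar> \<le> a"
      unfolding Re_step P_def[symmetric] q_def[symmetric] by (rule abs_div_le[OF pos])
    have "\<bar>- P - real n * q\<bar> \<le> c * (real n ^ 2 + 1)" using nq P h1 by linarith
    then have i: "\<bar>Im ((w + of_int e) / base n)\<bar> \<le> c"
      unfolding Im_step P_def[symmetric] q_def[symmetric] by (rule abs_div_le[OF pos])
    show "(w + of_int e) / base n \<in> ?B" using r i by simp
  qed
  then show ?thesis using z by auto
qed

lemma IB2:
  fixes N :: int
  assumes n2: "n \<ge> 2" and N0: "N \<ge> 0"
    and z: "z \<in> attractor (base n) {-N..N}"
  shows "\<bar>Im z\<bar> * ((real n ^ 2 - real n + 1) ^ 2 - 1) \<le> N * (real n ^ 2 + 1)"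
proof -
  define nn where "nn = real n"
  define D where "D = nn ^ 2 - nn + 1"
  have nn2: "nn \<ge> 2" using n2 unfolding nn_def by simp
  have "nn * nn \<ge> 2 * nn" using nn2 by (simp add: mult_right_mono)
  then have D3: "D \<ge> 3" unfolding D_def power2_eq_square using nn2 by linarith
  have "D * D \<ge> 3 * D" using D3 by (simp add: mult_right_mono)
  then have Dp: "D ^ 2 - 1 > 0" unfolding power2_eq_square using D3 by linarith
  define c where "c = N * (nn ^ 2 + 1) / (D ^ 2 - 1)"
  define a where "a = c * D - N"
  have cD: "c * (D ^ 2 - 1) = N * (nn ^ 2 + 1)" unfolding c_def using Dp by simp
  have c0: "c \<ge> 0" unfolding c_def using N0 Dp by simp
  have "N * (D ^ 2 - 1) \<le> N * (nn ^ 2 + 1) * D"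
  proof -
    have "D \<le> nn ^ 2 + 1" unfolding D_def using nn2 by simp
    then have "D * D \<le> (nn ^ 2 + 1) * D" using D3 by (simp add: mult_right_mono)
    then have "D ^ 2 - 1 \<le> (nn ^ 2 + 1) * D" by (simp add: power2_eq_square)
    then show ?thesis using N0 by (simp add: mult_left_mono mult.assoc)
  qed
  then have "N \<le> c * D" unfolding c_def using Dp by (simp add: field_simps)
  then have a0: "a \<ge> 0" unfolding a_def by simp
  have h1: "a + N + nn * c \<le> c * (nn ^ 2 + 1)"
    unfolding a_def D_def by (simp add: algebra_simps)
  have h2: "c + nn * (a + N) \<le> a * (nn ^ 2 + 1)"
  proof -
    have "a * (nn ^ 2 + 1) - c - nn * (a + N) = c * (D ^ 2 - 1) - N * (nn ^ 2 + 1)"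
      unfolding a_def D_def by (simp add: algebra_simps power2_eq_square)
    then show ?thesis using cD by simp
  qed
  have "\<bar>Im z\<bar> \<le> c"
    using IBgen[of n a c N z] n2 a0 c0 N0 h1 h2 z unfolding nn_def by simp
  then have "\<bar>Im z\<bar> * (D ^ 2 - 1) \<le> c * (D ^ 2 - 1)" using Dp by (simp add: mult_right_mono)
  then show ?thesis using cD unfolding D_def nn_def by simp
qed

lemma abs_leI: "- r \<le> (x::real) \<Longrightarrow> x \<le> r \<Longrightarrow> \<bar>x\<bar> \<le> r"
  by simp

lemma IB1:
  fixes N :: int
  assumes N0: "N \<ge> 0" and z: "z \<in> attractor (base 1) {-N..N}"
  shows "3 * \<bar>Im z\<bar> \<le> 5 * N"
proof -
  let ?B = "{z. \<bar>Re z\<bar> \<le> 4 * N / 3 \<and> \<bar>Im z\<bar> \<le> 5 * N / 3 \<and> \<bar>Re z + Im z\<bar> \<le> 7 * N / 3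
              \<and> \<bar>Re z - Im z\<bar> \<le> 5 * N / 3}"
  have "attractor (base 1) {-N..N} \<subseteq> ?B"
  proof (rule attractor_sub[where M=N])
    show "1 < cmod (base 1)" using norm_base_gt1[of 1] by simp
    show "\<forall>e\<in>{- N..N}. \<bar>e\<bar> \<le> N" by auto
    show "closed ?B"
      by (intro closed_Collect_conj closed_Collect_le continuous_intros)
    show "0 \<in> ?B" using N0 by simp
  next
    fix w e assume w: "w \<in> ?B" and e: "e \<in> {-N..N}"
    have r: "Re ((w + of_int e) / base 1) = (Im w - (Re w + of_int e)) / 2"
      using Re_step[of w e 1] by simp
    have i: "Im ((w + of_int e) / base 1) = (- (Re w + of_int e) - Im w) / 2"
      using Im_step[of w e 1] by simp
    define p where "p = Re w"
    define q where "q = Im w"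
    define E where "E = real_of_int e"
    define NN where "NN = real_of_int N"
    have ee: "- NN \<le> E" "E \<le> NN" using e unfolding E_def NN_def by auto
    have W: "\<bar>p\<bar> \<le> 4 * NN / 3" "\<bar>q\<bar> \<le> 5 * NN / 3" "\<bar>p + q\<bar> \<le> 7 * NN / 3" "\<bar>p - q\<bar> \<le> 5 * NN / 3"
      using w unfolding p_def q_def NN_def mem_Collect_eq by auto
    have h1: "- 4 * NN / 3 \<le> p" "p \<le> 4 * NN / 3" using W(1) unfolding abs_le_iff by linarith+
    have h2: "- 5 * NN / 3 \<le> q" "q \<le> 5 * NN / 3" using W(2) unfolding abs_le_iff by linarith+
    have h3: "- 7 * NN / 3 \<le> p + q" "p + q \<le> 7 * NN / 3" using W(3) unfolding abs_le_iff by linarith+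
    have h4: "- 5 * NN / 3 \<le> p - q" "p - q \<le> 5 * NN / 3" using W(4) unfolding abs_le_iff by linarith+
    have g1: "\<bar>(q - (p + E)) / 2\<bar> \<le> 4 * NN / 3"
      by (rule abs_leI) (use ee h4 in \<open>simp add: field_simps\<close>)+
    have g2: "\<bar>(- (p + E) - q) / 2\<bar> \<le> 5 * NN / 3"
      by (rule abs_leI) (use ee h3 in \<open>simp add: field_simps\<close>)+
    have g3: "\<bar>(q - (p + E)) / 2 + (- (p + E) - q) / 2\<bar> \<le> 7 * NN / 3"
      by (rule abs_leI) (use ee h1 in \<open>simp add: field_simps\<close>)+
    have g4: "\<bar>(q - (p + E)) / 2 - (- (p + E) - q) / 2\<bar> \<le> 5 * NN / 3"
      by (rule abs_leI) (use h2 in \<open>simp add: field_simps\<close>)+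
    show "(w + of_int e) / base 1 \<in> ?B"
      unfolding mem_Collect_eq r i using g1 g2 g3 g4 unfolding p_def q_def E_def NN_def by simp
  qed
  then show ?thesis using z by auto
qed


lemma attractor_mono:
  assumes "D \<subseteq> D'" shows "attractor b D \<subseteq> attractor b D'"
proof
  fix z assume "z \<in> attractor b D"
  then obtain d where "\<forall>k. d k \<in> D" "z = (\<Sum>k. of_int (d k) / b ^ Suc k)"
    unfolding attractor_def by blast
  then show "z \<in> attractor b D'" using assms unfolding attractor_def
    by (intro CollectI exI[of _ d]) auto
qed

lemma orbit_mem_scaled:
  fixes b :: complex and x :: "nat \<Rightarrow> complex" and c :: int
  assumes nb: "norm b > 1" and hx: "\<forall>k. norm (x k) \<le> C"
    and rec: "\<forall>k. x (Suc k) = b * x k - of_int (d k)" and hd: "\<forall>k. \<bar>c * d k\<bar> \<le> M"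
  shows "of_int c * x 0 \<in> attractor b {-M..M}"
proof -
  have "(\<lambda>k. of_int c * x k) 0 \<in> attractor b {-M..M}"
  proof (rule orbit_mem[OF nb, where C="\<bar>of_int c\<bar> * C" and d="\<lambda>k. c * d k"])
    show "\<forall>k. cmod (of_int c * x k) \<le> \<bar>of_int c\<bar> * C"
      using hx by (simp add: norm_mult mult_left_mono)
    show "\<forall>k. of_int c * x (Suc k) = b * (of_int c * x k) - of_int (c * d k)"
    proof
      fix k
      have "of_int c * x (Suc k) = of_int c * (b * x k - of_int (d k))" using rec by simp
      also have "\<dots> = b * (of_int c * x k) - of_int (c * d k)" by (simp add: algebra_simps)
      finally show "of_int c * x (Suc k) = b * (of_int c * x k) - of_int (c * d k)" .
    qed
    show "\<forall>k. c * d k \<in> {- M..M}"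
    proof
      fix k
      have "c * d k \<le> M" "- (c * d k) \<le> M" using abs_le_D1 abs_le_D2 hd by blast+
      then show "c * d k \<in> {- M..M}" by simp
    qed
  qed
  then show ?thesis by simp
qed

lemma one_in:
  fixes c :: int
  assumes n1: "n \<ge> 1"
  shows "of_int c \<in> attractor (base n) {-(\<bar>c\<bar> * int (n^2)) .. \<bar>c\<bar> * int (n^2)}"
proof -
  define f :: "nat \<Rightarrow> complex" where
    "f r = (if r = 0 then 1 else if r = 1 then of_nat n - 1 + \<i> else - of_nat n - \<i>)" for r
  define g :: "nat \<Rightarrow> int" where
    "g r = (if r = 0 then - (2 * int n - 1) else if r = 1 then - ((int n - 1)^2) else int n ^ 2)" for r
  have step: "f ((r + 1) mod 3) = base n * f r - of_int (g r)" if "r < 3" for r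
  proof -
    have "r = 0 \<or> r = 1 \<or> r = 2" using that by auto
    then show ?thesis
      by (auto simp: f_def g_def base_def complex_eq_iff power2_eq_square algebra_simps)
  qed
  have rec: "\<forall>k. f (Suc k mod 3) = base n * f (k mod 3) - of_int (g (k mod 3))"
    using step by (metis mod_Suc_eq Suc_eq_plus1 mod_less_divisor zero_less_numeral)
  have bnd: "\<forall>k. norm (f (k mod 3)) \<le> norm (f 0) + norm (f 1) + norm (f 2)"
  proof
    fix k :: nat
    have "k mod 3 = 0 \<or> k mod 3 = 1 \<or> k mod 3 = 2" by auto
    then show "norm (f (k mod 3)) \<le> norm (f 0) + norm (f 1) + norm (f 2)" by auto
  qed
  have gb: "\<bar>g r\<bar> \<le> int n ^ 2" for r
  proof -
    have "int n \<ge> 1" using n1 by simp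
    have sq: "(int n - 1)^2 = int n^2 - 2*int n + 1" by (simp add: power2_eq_square algebra_simps)
    have z: "0 \<le> (int n - 1)^2" by simp
    have "2 * int n - 1 \<le> int n ^ 2" "(int n - 1)^2 \<le> int n ^ 2"
      using sq z \<open>int n \<ge> 1\<close> by linarith+
    then show ?thesis unfolding g_def using \<open>int n \<ge> 1\<close> z by auto
  qed
  have hd: "\<forall>k. \<bar>c * g (k mod 3)\<bar> \<le> \<bar>c\<bar> * int (n^2)"
    using gb by (simp add: abs_mult mult_left_mono)
  have "of_int c * f (0 mod 3) \<in> attractor (base n) {-(\<bar>c\<bar> * int (n^2)) .. \<bar>c\<bar> * int (n^2)}"
    by (rule orbit_mem_scaled[OF norm_base_gt1[OF n1] bnd rec hd])
  then show ?thesis by (simp add: f_def)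
qed

lemma three_orbit:
  fixes c :: int and xa xb w :: complex
  assumes n1: "n \<ge> 1"
    and h1: "xb = base n * xa - of_int da"
    and h2: "- w = base n * xb - of_int db"
    and h3: "w = base n * (- w) - of_int e"
    and b0: "\<bar>c * da\<bar> \<le> M" and b1: "\<bar>c * db\<bar> \<le> M" and b2: "\<bar>c * e\<bar> \<le> M"
  shows "of_int c * xa \<in> attractor (base n) {-M..M}"
proof -
  define x where "x k = (if k = 0 then xa else if k = 1 then xb else if even k then - w else w)" for k :: nat
  define d where "d k = (if k = 0 then da else if k = 1 then db else if even k then e else - e)" for k :: nat
  have h3': "- w = base n * w - of_int (- e)"
  proof -
    have "- w = - (base n * (- w) - of_int e)" using h3 by simp
    then show ?thesis by (simp add: algebra_simps)
  qed
  have rec: "\<forall>k. x (Suc k) = base n * x k - of_int (d k)"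
  proof
    fix k :: nat
    show "x (Suc k) = base n * x k - of_int (d k)"
    proof (cases "k = 0")
      case True then show ?thesis using h1 unfolding x_def d_def by simp
    next
      case k0: False
      show ?thesis
      proof (cases "k = 1")
        case True then show ?thesis using h2 unfolding x_def d_def by simp
      next
        case False
        then show ?thesis
        proof (cases "even k")
          case True then show ?thesis using h3 k0 False unfolding x_def d_def by simp
        next
          case odd: False then show ?thesis using h3' k0 False unfolding x_def d_def by simp
        qed
      qed
    qed
  qed
  have bnd: "\<forall>k. norm (x k) \<le> norm xa + norm xb + norm w"
    unfolding x_def by auto
  have hd: "\<forall>k. \<bar>c * d k\<bar> \<le> M"
    unfolding d_def using b0 b1 b2 by auto
  have "of_int c * x 0 \<in> attractor (base n) {-M..M}"
    by (rule orbit_mem_scaled[OF norm_base_gt1[OF n1] bnd rec hd])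
  then show ?thesis by (simp add: x_def)
qed

lemma three_in:
  assumes n: "n \<in> {2,3,4}" and c: "\<bar>c\<bar> = 1"
  shows "of_int (3 * c) \<in> attractor (base n) {-(2 * int (n^2)) .. 2 * int (n^2)}"
proof -
  have cc: "\<bar>c * t\<bar> = \<bar>t\<bar>" for t using c by (simp add: abs_mult)
  have "of_int c * (3::complex) \<in> attractor (base n) {-(2 * int (n^2)) .. 2 * int (n^2)}"
  proof -
    consider "n = 2" | "n = 3" | "n = 4" using n by auto
    then show ?thesis
    proof cases
      case 1
      show ?thesis unfolding 1
        by (rule three_orbit[where xb = "2 + 3 * \<i>" and w = "4 + 4 * \<i>" and da = "-8" and db = "-3" and e = 8])
           (simp_all add: cc base_def complex_eq_iff)
    next
      case 2
      show ?thesis unfolding 2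
        by (rule three_orbit[where xb = "6 + 3 * \<i>" and w = "6 + 3 * \<i>" and da = "-15" and db = "-15" and e = 15])
           (simp_all add: cc base_def complex_eq_iff)
    next
      case 3
      show ?thesis unfolding 3
        by (rule three_orbit[where xb = "9 + 3 * \<i>" and w = "9 + 3 * \<i>" and da = "-21" and db = "-30" and e = 30])
           (simp_all add: cc base_def complex_eq_iff)
    qed
  qed
  then show ?thesis by (simp add: mult.commute)
qed

lemma T_char:
  assumes n1: "n \<ge> 1"
  shows "real_neighbours (T_set n) = {m. of_int m \<in> attractor (base n) {-int (n^2)..int (n^2)}}"
  unfolding T_set_def
proof (rule real_nb_char[OF norm_base_gt1[OF n1], where M = "int (n^2)"])
  show "\<forall>e\<in>{0..int (n\<^sup>2)}. \<bar>e\<bar> \<le> int (n\<^sup>2)" by auto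
  show "a - c \<in> {- int (n\<^sup>2)..int (n\<^sup>2)}" if "a \<in> {0..int (n\<^sup>2)}" "c \<in> {0..int (n\<^sup>2)}" for a c
    using that by auto
  show "\<exists>a\<in>{0..int (n\<^sup>2)}. \<exists>c\<in>{0..int (n\<^sup>2)}. e = a - c" if "e \<in> {- int (n\<^sup>2)..int (n\<^sup>2)}" for e
  proof (cases "e \<ge> 0")
    case True
    then show ?thesis using that by (intro bexI[of _ e] bexI[of _ 0]) auto
  next
    case False
    then show ?thesis using that by (intro bexI[of _ 0] bexI[of _ "- e"]) auto
  qed
qed

lemma E_char:
  assumes n1: "n \<ge> 1"
  shows "real_neighbours (E_set n) = {m. of_int m \<in> attractor (base n) {-(2 * int (n^2))..2 * int (n^2)}}"
  unfolding E_set_def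
proof (rule real_nb_char[OF norm_base_gt1[OF n1], where M = "int (n^2)"])
  show "\<forall>e\<in>{- int (n\<^sup>2)..int (n\<^sup>2)}. \<bar>e\<bar> \<le> int (n\<^sup>2)" by auto
  show "a - c \<in> {- (2 * int (n\<^sup>2))..2 * int (n\<^sup>2)}"
    if "a \<in> {- int (n\<^sup>2)..int (n\<^sup>2)}" "c \<in> {- int (n\<^sup>2)..int (n\<^sup>2)}" for a c
    using that by auto
  show "\<exists>a\<in>{- int (n\<^sup>2)..int (n\<^sup>2)}. \<exists>c\<in>{- int (n\<^sup>2)..int (n\<^sup>2)}. e = a - c"
    if "e \<in> {- (2 * int (n\<^sup>2))..2 * int (n\<^sup>2)}" for e
    using that by (intro bexI[of _ "e - e div 2"] bexI[of _ "- (e div 2)"]) auto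
qed

lemma upper:
  fixes N m :: int
  assumes n1: "n \<ge> 1" and N0: "N \<ge> 0" and m: "of_int m \<in> attractor (base n) {-N..N}"
  shows "\<exists>x1 x2 d. x1 \<in> attractor (base n) {-N..N} \<and> x2 \<in> attractor (base n) {-N..N} \<and>
           \<bar>d\<bar> \<le> N \<and> Im x1 = of_int m \<and> Im x2 = - 2 * real n * of_int m - of_int d"
proof -
  have nb: "norm (base n) > 1" using norm_base_gt1[OF n1] .
  have hD: "\<forall>e\<in>{-N..N}. \<bar>e\<bar> \<le> N" by auto
  obtain e where e: "e \<in> {-N..N}" and x1: "base n * of_int m - of_int e \<in> attractor (base n) {-N..N}"
    using attractor_shift[OF nb hD m] by blast
  obtain e' where x2: "base n * (base n * of_int m - of_int e) - of_int e' \<in> attractor (base n) {-N..N}"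
    using attractor_shift[OF nb hD x1] by blast
  have i1: "Im (base n * of_int m - of_int e) = of_int m" by (simp add: base_def)
  have i2: "Im (base n * (base n * of_int m - of_int e) - of_int e') = - 2 * real n * of_int m - of_int e"
    by (simp add: base_def algebra_simps)
  have "\<bar>e\<bar> \<le> N" using e by auto
  then show ?thesis using x1 x2 i1 i2 by blast
qed

lemma IB2i:
  fixes N t :: int
  assumes n2: "n \<ge> 2" and N0: "N \<ge> 0" and z: "z \<in> attractor (base n) {-N..N}" and t: "Im z = of_int t"
  shows "\<bar>t\<bar> * ((int n ^ 2 - int n + 1) ^ 2 - 1) \<le> N * (int n ^ 2 + 1)"
proof -
  have "real_of_int (\<bar>t\<bar> * ((int n ^ 2 - int n + 1) ^ 2 - 1)) \<le> real_of_int (N * (int n ^ 2 + 1))"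
    using IB2[OF n2 N0 z] t by simp
  then show ?thesis by linarith
qed

lemma IB1i:
  fixes N t :: int
  assumes N0: "N \<ge> 0" and z: "z \<in> attractor (base 1) {-N..N}" and t: "Im z = of_int t"
  shows "3 * \<bar>t\<bar> \<le> 5 * N"
proof -
  have "real_of_int (3 * \<bar>t\<bar>) \<le> real_of_int (5 * N)"
    using IB1[OF N0 z] t by simp
  then show ?thesis by linarith
qed

lemma P3:
  assumes "n \<ge> 3"
  shows "int n ^ 2 * (int n ^ 2 + 1) < 2 * ((int n ^ 2 - int n + 1) ^ 2 - 1)"
proof -
  obtain k where k: "n = k + 3" using assms by (metis add.commute le_iff_add)
  have "2 * ((int n ^ 2 - int n + 1) ^ 2 - 1) - int n ^ 2 * (int n ^ 2 + 1)
        = int k ^ 4 + 8 * int k ^ 3 + 23 * int k ^ 2 + 26 * int k + 6"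
    unfolding k by (simp add: power2_eq_square power3_eq_cube power4_eq_xxxx algebra_simps)
  moreover have "int k ^ 4 + 8 * int k ^ 3 + 23 * int k ^ 2 + 26 * int k + 6 > 0"
  proof -
    have "0 \<le> int k ^ 4" "0 \<le> int k ^ 3" "0 \<le> int k ^ 2" "0 \<le> int k" by simp_all
    then show ?thesis by linarith
  qed
  ultimately show ?thesis by linarith
qed

lemma P5:
  assumes "n \<ge> 5"
  shows "2 * (int n ^ 2 * (int n ^ 2 + 1)) < 3 * ((int n ^ 2 - int n + 1) ^ 2 - 1)"
proof -
  obtain k where k: "n = k + 5" using assms by (metis add.commute le_iff_add)
  have "3 * ((int n ^ 2 - int n + 1) ^ 2 - 1) - 2 * (int n ^ 2 * (int n ^ 2 + 1))
        = int k ^ 4 + 14 * int k ^ 3 + 67 * int k ^ 2 + 114 * int k + 20"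
    unfolding k by (simp add: power2_eq_square power3_eq_cube power4_eq_xxxx algebra_simps)
  moreover have "int k ^ 4 + 14 * int k ^ 3 + 67 * int k ^ 2 + 114 * int k + 20 > 0"
  proof -
    have "0 \<le> int k ^ 4" "0 \<le> int k ^ 3" "0 \<le> int k ^ 2" "0 \<le> int k" by simp_all
    then show ?thesis by linarith
  qed
  ultimately show ?thesis by linarith
qed

lemma upT:
  assumes n1: "n \<ge> 1" and m: "of_int m \<in> attractor (base n) {-int (n^2)..int (n^2)}"
  shows "\<bar>m\<bar> \<le> 1"
proof -
  obtain x1 x2 d where x1: "x1 \<in> attractor (base n) {-int (n^2)..int (n^2)}"
    and x2: "x2 \<in> attractor (base n) {-int (n^2)..int (n^2)}" and d: "\<bar>d\<bar> \<le> int (n^2)"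
    and i1: "Im x1 = of_int m" and i2': "Im x2 = - 2 * real n * of_int m - of_int d"
    using upper[OF n1 _ m] by auto
  have i2: "Im x2 = of_int (- 2 * int n * m - d)" using i2' by simp
  consider "n = 1" | "n = 2" | "n \<ge> 3" using n1 by linarith
  then show ?thesis
  proof cases
    case 1
    have "3 * \<bar>m\<bar> \<le> 5 * int (n^2)" using IB1i[of "int (n^2)" x1 m] x1 i1 unfolding 1 by simp
    then show ?thesis unfolding 1 by simp
  next
    case 2
    have a: "\<bar>m\<bar> * 8 \<le> 20" using IB2i[of n "int (n^2)" x1 m] x1 i1 unfolding 2 by simp
    have b: "\<bar>- 2 * int n * m - d\<bar> * 8 \<le> 20" using IB2i[of n "int (n^2)" x2] x2 i2 unfolding 2 by simp
    show ?thesis using a b d unfolding 2 by (auto simp: abs_if split: if_splits)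
  next
    case 3
    define A where "A = (int n ^ 2 - int n + 1) ^ 2 - 1"
    have a: "\<bar>m\<bar> * A \<le> int (n^2) * (int n ^ 2 + 1)"
      using IB2i[of n "int (n^2)" x1 m] x1 i1 3 unfolding A_def by simp
    have p: "int n ^ 2 * (int n ^ 2 + 1) < 2 * A" using P3[OF 3] unfolding A_def .
    have A0: "A > 0" using p by (smt (verit) zero_le_power2 mult_nonneg_nonneg)
    show ?thesis
    proof (rule ccontr)
      assume "\<not> \<bar>m\<bar> \<le> 1"
      then have "2 * A \<le> \<bar>m\<bar> * A" using A0 by (simp add: mult_right_mono)
      then show False using a p by simp
    qed
  qed
qed

lemma upE:
  assumes n1: "n \<ge> 1" and m: "of_int m \<in> attractor (base n) {-(2 * int (n^2))..2 * int (n^2)}"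
  shows "(n = 1 \<or> n \<ge> 5 \<longrightarrow> \<bar>m\<bar> \<le> 2) \<and> \<bar>m\<bar> \<le> 3"
proof -
  obtain x1 x2 d where x1: "x1 \<in> attractor (base n) {-(2 * int (n^2))..2 * int (n^2)}"
    and x2: "x2 \<in> attractor (base n) {-(2 * int (n^2))..2 * int (n^2)}" and d: "\<bar>d\<bar> \<le> 2 * int (n^2)"
    and i1: "Im x1 = of_int m" and i2': "Im x2 = - 2 * real n * of_int m - of_int d"
    using upper[OF n1 _ m] by auto
  have i2: "Im x2 = of_int (- 2 * int n * m - d)" using i2' by simp
  consider "n = 1" | "n = 2" | "n = 3 \<or> n = 4" | "n \<ge> 5" using n1 by linarith
  then show ?thesis
  proof cases
    case 1
    have a: "3 * \<bar>m\<bar> \<le> 10" using IB1i[of "2 * int (n^2)" x1 m] x1 i1 unfolding 1 by simp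
    have b: "3 * \<bar>- 2 * int n * m - d\<bar> \<le> 10" using IB1i[of "2 * int (n^2)" x2] x2 i2 unfolding 1 by simp
    have "\<bar>m\<bar> \<le> 2" using a b d unfolding 1 by (auto simp: abs_if split: if_splits)
    then show ?thesis by simp
  next
    case 2
    have a: "\<bar>m\<bar> * 8 \<le> 40" using IB2i[of n "2 * int (n^2)" x1 m] x1 i1 unfolding 2 by simp
    have b: "\<bar>- 2 * int n * m - d\<bar> * 8 \<le> 40" using IB2i[of n "2 * int (n^2)" x2] x2 i2 unfolding 2 by simp
    have "\<bar>m\<bar> \<le> 3" using a b d unfolding 2 by (auto simp: abs_if split: if_splits)
    then show ?thesis using 2 by simp
  next
    case 3
    then have n3: "n \<ge> 3" by auto
    define A where "A = (int n ^ 2 - int n + 1) ^ 2 - 1"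
    have a: "\<bar>m\<bar> * A \<le> 2 * int (n^2) * (int n ^ 2 + 1)"
      using IB2i[of n "2 * int (n^2)" x1 m] x1 i1 n3 unfolding A_def by simp
    have p: "int n ^ 2 * (int n ^ 2 + 1) < 2 * A" using P3[OF n3] unfolding A_def .
    have A0: "A > 0" using p by (smt (verit) zero_le_power2 mult_nonneg_nonneg)
    have "\<bar>m\<bar> \<le> 3"
    proof (rule ccontr)
      assume "\<not> \<bar>m\<bar> \<le> 3"
      then have "4 * A \<le> \<bar>m\<bar> * A" using A0 by (simp add: mult_right_mono)
      then show False using a p by simp
    qed
    then show ?thesis using 3 by auto
  next
    case 4
    then have n3: "n \<ge> 3" by auto
    define A where "A = (int n ^ 2 - int n + 1) ^ 2 - 1"
    have a: "\<bar>m\<bar> * A \<le> 2 * int (n^2) * (int n ^ 2 + 1)"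
      using IB2i[of n "2 * int (n^2)" x1 m] x1 i1 n3 unfolding A_def by simp
    have p: "2 * (int n ^ 2 * (int n ^ 2 + 1)) < 3 * A" using P5[OF 4] unfolding A_def .
    have A0: "A > 0" using p by (smt (verit) zero_le_power2 mult_nonneg_nonneg)
    have "\<bar>m\<bar> \<le> 2"
    proof (rule ccontr)
      assume "\<not> \<bar>m\<bar> \<le> 2"
      then have "3 * A \<le> \<bar>m\<bar> * A" using A0 by (simp add: mult_right_mono)
      then show False using a p by simp
    qed
    then show ?thesis by simp
  qed
qed

lemma low_gen:
  fixes m k :: int
  assumes n1: "n \<ge> 1" and mk: "\<bar>m\<bar> \<le> k"
  shows "of_int m \<in> attractor (base n) {-(k * int (n^2))..k * int (n^2)}"
proof -
  have "\<bar>m\<bar> * int (n^2) \<le> k * int (n^2)" using mk by (simp add: mult_right_mono)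
  then have "{-(\<bar>m\<bar> * int (n^2))..\<bar>m\<bar> * int (n^2)} \<subseteq> {-(k * int (n^2))..k * int (n^2)}" by auto
  then show ?thesis using one_in[OF n1, of m] attractor_mono by blast
qed

theorem corollary3p4:
  fixes n :: nat
  assumes "n \<ge> 1"
  shows "(n = 1 \<or> n \<ge> 5 \<longrightarrow> real_neighbours (E_set n) = {-2 .. 2})
       \<and> (n \<in> {2,3,4} \<longrightarrow> real_neighbours (E_set n) = {-3 .. 3})
       \<and> real_neighbours (T_set n) = {-1 .. 1}"
proof (intro conjI impI)
  have n1: "n \<ge> 1" using assms .
  show "real_neighbours (T_set n) = {-1 .. 1}"
  proof -
    have "of_int m \<in> attractor (base n) {-int (n^2)..int (n^2)} \<longleftrightarrow> m \<in> {-1..1}" for m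
    proof
      assume "of_int m \<in> attractor (base n) {-int (n^2)..int (n^2)}"
      then show "m \<in> {-1..1}" using upT[OF n1] by (auto simp: abs_le_iff)
    next
      assume "m \<in> {-1..1}"
      then have "\<bar>m\<bar> \<le> 1" by auto
      then show "of_int m \<in> attractor (base n) {-int (n^2)..int (n^2)}"
        using low_gen[OF n1, of m 1] by simp
    qed
    then show ?thesis unfolding T_char[OF n1] by blast
  qed
  show "real_neighbours (E_set n) = {-2 .. 2}" if h: "n = 1 \<or> n \<ge> 5"
  proof -
    have "of_int m \<in> attractor (base n) {-(2 * int (n^2))..2 * int (n^2)} \<longleftrightarrow> m \<in> {-2..2}" for m
    proof
      assume "of_int m \<in> attractor (base n) {-(2 * int (n^2))..2 * int (n^2)}"
      then have "\<bar>m\<bar> \<le> 2" using upE[OF n1] h by blast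
      then show "m \<in> {-2..2}" by (auto simp: abs_le_iff)
    next
      assume "m \<in> {-2..2}"
      then have "\<bar>m\<bar> \<le> 2" by auto
      then show "of_int m \<in> attractor (base n) {-(2 * int (n^2))..2 * int (n^2)}"
        using low_gen[OF n1, of m 2] by simp
    qed
    then show ?thesis unfolding E_char[OF n1] by blast
  qed
  show "real_neighbours (E_set n) = {-3 .. 3}" if h: "n \<in> {2,3,4}"
  proof -
    have "of_int m \<in> attractor (base n) {-(2 * int (n^2))..2 * int (n^2)} \<longleftrightarrow> m \<in> {-3..3}" for m
    proof
      assume "of_int m \<in> attractor (base n) {-(2 * int (n^2))..2 * int (n^2)}"
      then have "\<bar>m\<bar> \<le> 3" using upE[OF n1] by blast
      then show "m \<in> {-3..3}" by (auto simp: abs_le_iff)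
    next
      assume "m \<in> {-3..3}"
      then have m3: "\<bar>m\<bar> \<le> 3" by auto
      show "of_int m \<in> attractor (base n) {-(2 * int (n^2))..2 * int (n^2)}"
      proof (cases "\<bar>m\<bar> \<le> 2")
        case True
        then show ?thesis using low_gen[OF n1, of m 2] by simp
      next
        case False
        then have "m = 3 * 1 \<or> m = 3 * (-1)" using m3 by auto
        then show ?thesis using three_in[OF h, of 1] three_in[OF h, of "-1"] by auto
      qed
    qed
    then show ?thesis unfolding E_char[OF n1] by blast
  qed
qed

end
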